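(* Let $B$ be a commutative ring with identity, $A$ a dense subring of $B$, and $M$ a maximal ideal of $B$. Then there is no prime ideal $P$ of $B$ such that $M\cap A\subsetneq P\cap A$.
   Context: All rings are commutative with identity; subrings contain the identity. A subring $A$ of $B$ is dense in $B$ if for every ideal $I$ of $B$ and every $b\in B\setminus \operatorname{rad}(I)$ there exists $a\in B\setminus\operatorname{rad}(I)$ with $ab\in A$. *)

theory Defs
  imports "HOL-Algebra.Algebra"
begin

definition ring_radical :: "('a, 'm) ring_scheme \<Rightarrow> 'a set \<Rightarrow> 'a set" where
  "ring_radical B I = {x \<in> carrier B. \<exists>n::nat. x [^]\<^bsub>B\<^esub> n \<in> I}"

definition dense_subring :: "'a set \<Rightarrow> ('a, 'm) ring_scheme \<Rightarrow> bool" where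
  "dense_subring A B \<longleftrightarrow> subring A B \<and>
     (\<forall>I. ideal I B \<longrightarrow>
        (\<forall>b \<in> carrier B - ring_radical B I.
           \<exists>a \<in> carrier B - ring_radical B I. a \<otimes>\<^bsub>B\<^esub> b \<in> A))"

end

theory Submission
  imports Defs
begin

lemma prime_pow_in:
  fixes B (structure)
  assumes "primeideal P B" and "m \<in> carrier B" and "m [^] (n::nat) \<in> P"
  shows "m \<in> P"
  using assms(3)
proof (induction n)
  case 0
  interpret primeideal P B by fact
  have "\<one> \<in> P" using 0 by simp
  then have "carrier B \<subseteq> P" using I_r_closed by (metis l_one subsetI)
  then show ?case using I_notcarr a_subset by blast
next
  case (Suc n)
  interpret primeideal P B by fact
  have "m [^] n \<otimes> m \<in> P" using Suc.prems by simp
  then have "m [^] n \<in> P \<or> m \<in> P" using I_prime assms(2) by simp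
  then show ?case using Suc.IH by blast
qed

theorem corollary4p3:
  fixes B (structure) and A :: "'a set" and M :: "'a set"
  assumes "cring B"
    and "dense_subring A B"
    and "maximalideal M B"
  shows "\<not> (\<exists>P. primeideal P B \<and> M \<inter> A \<subset> P \<inter> A)"
proof
  assume "\<exists>P. primeideal P B \<and> M \<inter> A \<subset> P \<inter> A"
  then obtain P where P: "primeideal P B" and sub: "M \<inter> A \<subset> P \<inter> A" by blast
  interpret cring B by fact
  interpret MI: maximalideal M B by fact
  interpret PI: primeideal P B by fact
  obtain x where xP: "x \<in> P" and xA: "x \<in> A" and xM: "x \<notin> M" using sub by blast
  have xc: "x \<in> carrier B" using xP PI.a_subset by blast
  define J where "J = set_add B M (PIdl x)"
  have idJ: "ideal J B" unfolding J_def
    by (rule add_ideals[OF MI.is_ideal cgenideal_ideal[OF xc]])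
  have MJ: "M \<subseteq> J"
  proof
    fix m assume "m \<in> M"
    moreover have "\<zero> \<in> PIdl x" using cgenideal_def xc by (metis (mono_tags, lifting) l_null mem_Collect_eq zero_closed)
    moreover have "m = m \<oplus> \<zero>" using \<open>m \<in> M\<close> MI.a_subset by auto
    ultimately show "m \<in> J" unfolding J_def set_add_def' by blast
  qed
  have "x \<in> J"
  proof -
    have "\<zero> \<in> M" by (simp add: MI.additive_subgroup_axioms additive_subgroup.zero_closed)
    moreover have "x \<in> PIdl x" using cgenideal_self xc by blast
    moreover have "x = \<zero> \<oplus> x" using xc by simp
    ultimately show ?thesis unfolding J_def set_add_def' by blast
  qed
  then have "J \<noteq> M" using xM by blast
  moreover have "J \<subseteq> carrier B" using idJ ideal.axioms(1) additive_subgroup.a_subset by blast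
  ultimately have "J = carrier B" using MI.I_maximal idJ MJ by blast
  then have "\<one> \<in> J" by simp
  then obtain m y where mM: "m \<in> M" and yI: "y \<in> PIdl x" and one: "\<one> = m \<oplus> y"
    unfolding J_def set_add_def' by blast
  have yP: "y \<in> P" using yI cgenideal_minimal[OF PI.is_ideal xP] by blast
  have mc: "m \<in> carrier B" using mM MI.a_subset by blast
  have yc: "y \<in> carrier B" using yP PI.a_subset by blast
  have mP: "m \<notin> P"
  proof
    assume "m \<in> P"
    then have "\<one> \<in> P" using one yP PI.a_closed by simp
    then have "carrier B \<subseteq> P" using PI.I_r_closed by (metis l_one subsetI)
    then show False using PI.I_notcarr PI.a_subset by blast
  qed
  have mrad: "m \<in> carrier B - ring_radical B P"
    using mc mP prime_pow_in[OF P mc] unfolding ring_radical_def by blast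
  obtain a where a: "a \<in> carrier B - ring_radical B P" and amA: "a \<otimes> m \<in> A"
    using assms(2) PI.is_ideal mrad unfolding dense_subring_def by blast
  have ac: "a \<in> carrier B" using a by blast
  have aP: "a \<notin> P"
  proof
    assume "a \<in> P"
    then have "a [^] (1::nat) \<in> P" using ac by simp
    then show False using a unfolding ring_radical_def by blast
  qed
  have "a \<otimes> m \<in> M" using MI.I_l_closed ac mM by blast
  then have "a \<otimes> m \<in> P" using amA sub by blast
  then show False using PI.I_prime ac mc aP mP by blast
qed

end
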